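(* Let $G=(V,E)$ be a digraph with pairwise distinct vertices $a,b,1$ such that: (1) $1^+\neq\varnothing$; (2) there exists $a'\in V$ with $a^+\cap 1^-=\{a'\}$ and $a'^-\cap 1^-=\{a\}$; (3) $b\in 1^-$ and there exists $b'\in 1^-$ with $b'\in b^+$. Then $G$ is not congruence modular.
   Context: Digraphs are finite and loopless. For a vertex $x$, $x^+=\{v:(x,v)\in E\}$ and $x^-=\{v:(v,x)\in E\}$. A ternary polymorphism is a map $f:V^3\to V$ with $(f(a_1,a_2,a_3),f(b_1,b_2,b_3))\in E$ whenever all $(a_i,b_i)\in E$. $G$ is congruence modular if it has ternary polymorphisms $s_0,\dots,s_{2n},p$ (for some $n$) satisfying, for all vertices: $s_0(x,y,z)=x$; $s_i(x,y,x)=x$ for all $i\le 2n$; $s_i(x,y,y)=s_{i+1}(x,y,y)$ for even $i<2n$; $s_i(x,x,y)=s_{i+1}(x,x,y)$ for odd $i<2n$; $s_{2n}(x,y,y)=p(x,y,y)$; $p(x,x,y)=y$. *)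

theory Defs
  imports Main
begin

definition digraph :: "'a set \<Rightarrow> ('a \<times> 'a) set \<Rightarrow> bool" where
  "digraph V E \<longleftrightarrow> finite V \<and> E \<subseteq> V \<times> V \<and> (\<forall>x. (x, x) \<notin> E)"

definition out_nbrs :: "('a \<times> 'a) set \<Rightarrow> 'a \<Rightarrow> 'a set" where
  "out_nbrs E x = {v. (x, v) \<in> E}"

definition in_nbrs :: "('a \<times> 'a) set \<Rightarrow> 'a \<Rightarrow> 'a set" where
  "in_nbrs E x = {v. (v, x) \<in> E}"

text \<open>Ternary polymorphism: a map V^3 \<rightarrow> V preserving edges (only its values on V^3 matter).\<close>
definition ternary_polymorphism :: "'a set \<Rightarrow> ('a \<times> 'a) set \<Rightarrow> ('a \<Rightarrow> 'a \<Rightarrow> 'a \<Rightarrow> 'a) \<Rightarrow> bool" where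
  "ternary_polymorphism V E f \<longleftrightarrow>
     (\<forall>x\<in>V. \<forall>y\<in>V. \<forall>z\<in>V. f x y z \<in> V) \<and>
     (\<forall>a1 a2 a3 b1 b2 b3. (a1, b1) \<in> E \<longrightarrow> (a2, b2) \<in> E \<longrightarrow> (a3, b3) \<in> E \<longrightarrow>
        (f a1 a2 a3, f b1 b2 b3) \<in> E)"

text \<open>Congruence modularity via the Gumm-term style identities from the paper.\<close>
definition congruence_modular :: "'a set \<Rightarrow> ('a \<times> 'a) set \<Rightarrow> bool" where
  "congruence_modular V E \<longleftrightarrow>
    (\<exists>(n::nat) (s :: nat \<Rightarrow> 'a \<Rightarrow> 'a \<Rightarrow> 'a \<Rightarrow> 'a) p.
       (\<forall>i\<le>2*n. ternary_polymorphism V E (s i)) \<and> ternary_polymorphism V E p \<and>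
       (\<forall>x\<in>V. \<forall>y\<in>V. \<forall>z\<in>V. s 0 x y z = x) \<and>
       (\<forall>i\<le>2*n. \<forall>x\<in>V. \<forall>y\<in>V. s i x y x = x) \<and>
       (\<forall>i<2*n. even i \<longrightarrow> (\<forall>x\<in>V. \<forall>y\<in>V. s i x y y = s (Suc i) x y y)) \<and>
       (\<forall>i<2*n. odd i \<longrightarrow> (\<forall>x\<in>V. \<forall>y\<in>V. s i x x y = s (Suc i) x x y)) \<and>
       (\<forall>x\<in>V. \<forall>y\<in>V. s (2*n) x y y = p x y y) \<and>
       (\<forall>x\<in>V. \<forall>y\<in>V. p x x y = y))"

end

theory Submission
  imports Defs
begin

lemma key_equiv:
  fixes f :: "'a \<Rightarrow> 'a \<Rightarrow> 'a \<Rightarrow> 'a"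
  assumes poly: "\<And>a1 a2 a3 b1 b2 b3. (a1, b1) \<in> E \<Longrightarrow> (a2, b2) \<in> E \<Longrightarrow> (a3, b3) \<in> E \<Longrightarrow>
        (f a1 a2 a3, f b1 b2 b3) \<in> E"
    and f1: "f one c one = one" "f one one one = one"
    and e: "(a,a')\<in>E" "(a,one)\<in>E" "(a',one)\<in>E" "(b,one)\<in>E" "(b,b')\<in>E" "(b',one)\<in>E" "(one,c)\<in>E"
    and uA: "\<And>w. (a,w)\<in>E \<Longrightarrow> (w,one)\<in>E \<Longrightarrow> w=a'"
    and uB: "\<And>w. (w,a')\<in>E \<Longrightarrow> (w,one)\<in>E \<Longrightarrow> w=a"
  shows "f a a b = a \<longleftrightarrow> f a b b = a"
proof -
  have m: "(f a' one b', one) \<in> E" using poly[OF e(3) e(7) e(6)] f1 by simp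
  have x1: "(f a a b, f a' one b') \<in> E" using poly[OF e(1) e(2) e(5)] .
  have x2: "(f a b b, f a' one b') \<in> E" using poly[OF e(1) e(4) e(5)] .
  have y1: "(f a a b, one) \<in> E" using poly[OF e(2) e(2) e(4)] f1 by simp
  have y2: "(f a b b, one) \<in> E" using poly[OF e(2) e(4) e(4)] f1 by simp
  show ?thesis
  proof
    assume "f a a b = a"
    then have "f a' one b' = a'" using uA[OF _ m] x1 by simp
    then show "f a b b = a" using uB[OF _ y2] x2 by simp
  next
    assume "f a b b = a"
    then have "f a' one b' = a'" using uA[OF _ m] x2 by simp
    then show "f a a b = a" using uB[OF _ y1] x1 by simp
  qed
qed

theorem lemma7p1:
  fixes V :: "'a set" and E :: "('a \<times> 'a) set" and a b one :: 'a
  assumes "digraph V E"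
    and "a \<in> V" "b \<in> V" "one \<in> V"
    and "a \<noteq> b" "a \<noteq> one" "b \<noteq> one"
    and "out_nbrs E one \<noteq> {}"
    and "\<exists>a'\<in>V. out_nbrs E a \<inter> in_nbrs E one = {a'} \<and> in_nbrs E a' \<inter> in_nbrs E one = {a}"
    and "b \<in> in_nbrs E one"
    and "\<exists>b'\<in>in_nbrs E one. b' \<in> out_nbrs E b"
  shows "\<not> congruence_modular V E"
proof
  assume cm: "congruence_modular V E"
  have EV: "E \<subseteq> V \<times> V" using assms(1) by (simp add: digraph_def)
  obtain c where ec: "(one,c)\<in>E" using assms(8) by (auto simp: out_nbrs_def)
  obtain a' where a'V: "a'\<in>V" and hA: "out_nbrs E a \<inter> in_nbrs E one = {a'}"
     and hB: "in_nbrs E a' \<inter> in_nbrs E one = {a}" using assms(9) by blast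
  obtain b' where eb: "(b',one)\<in>E" "(b,b')\<in>E" using assms(11) by (auto simp: out_nbrs_def in_nbrs_def)
  have eb1: "(b,one)\<in>E" using assms(10) by (simp add: in_nbrs_def)
  have ea: "(a,a')\<in>E" "(a',one)\<in>E" "(a,one)\<in>E" using hA hB by (auto simp: out_nbrs_def in_nbrs_def)
  have uA: "\<And>w. (a,w)\<in>E \<Longrightarrow> (w,one)\<in>E \<Longrightarrow> w=a'" using hA by (auto simp: out_nbrs_def in_nbrs_def)
  have uB: "\<And>w. (w,a')\<in>E \<Longrightarrow> (w,one)\<in>E \<Longrightarrow> w=a" using hB by (auto simp: out_nbrs_def in_nbrs_def)
  have cV: "c \<in> V" using ec EV by auto
  obtain n s p where H: "(\<forall>i\<le>2*n. ternary_polymorphism V E (s i)) \<and> (ternary_polymorphism V E p) \<and> (\<forall>x\<in>V. \<forall>y\<in>V. \<forall>z\<in>V. s 0 x y z = x) \<and> (\<forall>i\<le>2*n. \<forall>x\<in>V. \<forall>y\<in>V. s i x y x = x) \<and> (\<forall>i<2*n. even i \<longrightarrow> (\<forall>x\<in>V. \<forall>y\<in>V. s i x y y = s (Suc i) x y y)) \<and> (\<forall>i<2*n. odd i \<longrightarrow> (\<forall>x\<in>V. \<forall>y\<in>V. s i x x y = s (Suc i) x x y)) \<and> (\<forall>x\<in>V. \<forall>y\<in>V. s (2*n) x y y = p x y y) \<and> (\<forall>x\<in>V. \<forall>y\<in>V. p x x y = y)"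
    using cm unfolding congruence_modular_def by (elim exE) (rule that)
  have sp: "\<forall>i\<le>2*n. ternary_polymorphism V E (s i)" using H by (elim conjE) assumption
  have pp: "ternary_polymorphism V E p" using H by (elim conjE) assumption
  have s0: "\<forall>x\<in>V. \<forall>y\<in>V. \<forall>z\<in>V. s 0 x y z = x" using H by (elim conjE) assumption
  have sx: "\<forall>i\<le>2*n. \<forall>x\<in>V. \<forall>y\<in>V. s i x y x = x" using H by (elim conjE) assumption
  have se: "\<forall>i<2*n. even i \<longrightarrow> (\<forall>x\<in>V. \<forall>y\<in>V. s i x y y = s (Suc i) x y y)" using H by (elim conjE) assumption
  have so: "\<forall>i<2*n. odd i \<longrightarrow> (\<forall>x\<in>V. \<forall>y\<in>V. s i x x y = s (Suc i) x x y)" using H by (elim conjE) assumption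
  have sn: "\<forall>x\<in>V. \<forall>y\<in>V. s (2*n) x y y = p x y y" using H by (elim conjE) assumption
  have px: "\<forall>x\<in>V. \<forall>y\<in>V. p x x y = y" using H by (elim conjE) assumption
  have eqv: "s i a a b = a \<longleftrightarrow> s i a b b = a" if "i \<le> 2*n" for i
  proof (rule key_equiv[where E=E and one=one and c=c and a'=a' and b'=b'])
    show "\<And>a1 a2 a3 b1 b2 b3. (a1, b1) \<in> E \<Longrightarrow> (a2, b2) \<in> E \<Longrightarrow> (a3, b3) \<in> E \<Longrightarrow>
        (s i a1 a2 a3, s i b1 b2 b3) \<in> E" using sp that by (simp add: ternary_polymorphism_def)
    show "s i one c one = one" "s i one one one = one" using sx that cV assms(4) by auto
  qed (fact ea eb eb1 ec uA uB)+
  have "i \<le> 2*n \<longrightarrow> s i a b b = a" for i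
  proof (induction i)
    case 0 then show ?case using s0 assms(2,3) by simp
  next
    case (Suc i)
    show ?case
    proof
      assume h: "Suc i \<le> 2*n"
      then have IH: "s i a b b = a" using Suc by simp
      show "s (Suc i) a b b = a"
      proof (cases "even i")
        case True then show ?thesis using se h IH assms(2,3) by auto
      next
        case False
        have "s i a a b = a" using eqv[of i] h IH by simp
        then have "s (Suc i) a a b = a" using so h False assms(2,3) by auto
        then show ?thesis using eqv[of "Suc i"] h by simp
      qed
    qed
  qed
  then have "s (2*n) a b b = a" by simp
  then have "p a b b = a" using sn assms(2,3) by simp
  moreover have "(p a b b, p one one b') \<in> E" using pp eb1 eb ea(3) by (simp add: ternary_polymorphism_def)
  moreover have "p one one b' = b'" using px eb EV assms(4) by blast
  ultimately have "(a,b')\<in>E" by simp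
  then have "b' = a'" using uA eb by blast
  then have "b = a" using uB eb eb1 by blast
  then show False using assms(5) by simp
qed

end
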